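(* Let $\mathbb{H}$ be a finite-dimensional complex Hilbert space, fix $O_0=\{|e_n\rangle\langle e_n^*|\}_{n}\in\tilde{\mathcal{W}}(\mathbb{H})$, and let $\Omega$ be an $O_0$-connection. Let $C_W:[0,\tau]\ni t\mapsto O(t)\in\tilde{\mathcal{W}}(\mathbb{H})$ be a smooth curve relative to $O_0$. Then for every $V_0\in\mathcal{F}^{O(0)}_{O_0}$ there exists a unique horizontal $O_0$-lift $t\mapsto\tilde V(t)$ of $C_W$ with respect to $\Omega$ such that $\tilde V(0)=V_0$.
   Context: Let $d=\dim\mathbb{H}$. A complete decomposition is a set $\{|n\rangle\langle n^*|:1\le n\le d\}$ of rank-one operators with $\sum_n|n\rangle\langle n^*|=I$ and $\langle n^*|m\rangle=\delta_{nm}$; $\tilde{\mathcal{W}}(\mathbb{H})$ is the set of all complete decompositions. $\mathcal{T}(\mathbb{H})$ is the group of invertible operators on $\mathbb{H}$. For $O\in\tilde{\mathcal{W}}(\mathbb{H})$, $\mathcal{F}^O_{O_0}=\{V\in\mathcal{T}(\mathbb{H}):V^{-1}OV=O_0\}$ (where $V^{-1}OV=\{V^{-1}aV:a\in O\}$); these fibers partition $\mathcal{T}(\mathbb{H})$, and $\Pi(V)=O$ iff $V\in\mathcal{F}^O_{O_0}$. Let $\mathcal{G}_{O_0}=\{\sum_nc_n|e_{\sigma(n)}\rangle\langle e_n^*|:\sigma\text{ a permutation},c_n\in\mathbb{C}\setminus\{0\}\}$ and $\mathrm{g}_{O_0}=\{\sum_n\alpha_n|e_n\rangle\langle e_n^*|:\alpha_n\in\mathbb{C}\}$.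 For $P\in\mathcal{T}(\mathbb{H})$, a tangent vector at $P$ is any linear operator $Q$ on $\mathbb{H}$ (derivative at $0$ of a differentiable curve in $\mathcal{T}(\mathbb{H})$ through $P$); $Q$ is vertical if it is the derivative at $0$ of a differentiable curve in the fiber $\mathcal{F}^{\Pi(P)}_{O_0}$ through $P$. An $O_0$-connection is a family $\Omega=\{\Omega_P\}_{P\in\mathcal{T}(\mathbb{H})}$ of linear maps from the tangent space at $P$ into $\mathrm{g}_{O_0}$ such that (1) $\Omega_P(Q)=P^{-1}Q$ for every vertical $Q$ at $P$; (2) if $P_k\to P_0$ in $\mathcal{T}(\mathbb{H})$ and $Q_k\to Q_0$, then $\Omega_{P_k}(Q_k)\to\Omega_{P_0}(Q_0)$; (3) $\Omega_{PG}(QG)=G^{-1}\Omega_P(Q)G$ for all $G\in\mathcal{G}_{O_0}$, $P$, $Q$. An $O_0$-lift of a continuous curve $t\mapsto O(t)$ is a continuous curve $V:[0,\tau]\to\mathcal{T}(\mathbb{H})$ with $V(t)\in\mathcal{F}^{O(t)}_{O_0}$ for all $t$; it is smooth if it is continuously differentiable on $[0,\tau]$. The curve $C_W$ is smooth relative to $O_0$ if it admits a smooth $O_0$-lift. A horizontal $O_0$-lift with respect to $\Omega$ is a smooth $O_0$-lift $\tilde V$ with $\Omega_{\tilde V(t)}\big[\frac{d\tilde V(t)}{dt}\big]=0$ for all $t\in[0,\tau]$. *)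

theory Defs
  imports "HOL-Analysis.Analysis"
begin

text \<open>The Hilbert space H is modelled as complex^'n (standard inner product, 'n finite,
  d = CARD('n)); operators on H are matrices complex^'n^'n.\<close>

type_synonym 'n op = "complex^'n::finite^'n::finite"

text \<open>The rank-one operator |u><w| : x \<mapsto> <w|x> u.\<close>
definition ketbra :: "complex^'n::finite \<Rightarrow> complex^'n \<Rightarrow> 'n op" where
  "ketbra u w = (\<chi> i j. u$i * cnj (w$j))"

text \<open>The pairing <w|u> (conjugate-linear in w).\<close>
definition braket :: "complex^'n::finite \<Rightarrow> complex^'n \<Rightarrow> complex" where
  "braket w u = (\<Sum>i\<in>UNIV. cnj (w$i) * u$i)"

text \<open>Complex scalar multiplication of operators.\<close>
definition cscale :: "complex \<Rightarrow> ('n::finite) op \<Rightarrow> 'n op" where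
  "cscale c M = (\<chi> i j. c * M$i$j)"

text \<open>(e, es) is a biorthogonal family giving a complete decomposition.\<close>
definition is_cd_family :: "('n::finite \<Rightarrow> complex^'n) \<Rightarrow> ('n \<Rightarrow> complex^'n) \<Rightarrow> bool" where
  "is_cd_family e es \<longleftrightarrow>
     (\<Sum>k\<in>UNIV. ketbra (e k) (es k)) = mat 1 \<and>
     (\<forall>k l. braket (es k) (e l) = (if k = l then 1 else 0))"

text \<open>The set \<tilde>W(H) of complete decompositions.\<close>
definition complete_decomps :: "('n::finite) op set set" where
  "complete_decomps = {Oc. \<exists>e es. is_cd_family e es \<and> Oc = range (\<lambda>k. ketbra (e k) (es k))}"

text \<open>T(H): invertible operators.\<close>
definition invops :: "('n::finite) op set" where
  "invops = {V. invertible V}"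

text \<open>The fiber F^O_{O0} = {V \<in> T(H). V^{-1} Oc V = O0}.\<close>
definition fiber :: "('n::finite) op set \<Rightarrow> 'n op set \<Rightarrow> 'n op set" where
  "fiber Oc O0 = {V. invertible V \<and> (\<lambda>a. matrix_inv V ** a ** V) ` Oc = O0}"

text \<open>The group G_{O0} and the algebra g_{O0}, relative to O0 = {|e_n><e_n^*|}.\<close>
definition GO :: "('n::finite \<Rightarrow> complex^'n) \<Rightarrow> ('n \<Rightarrow> complex^'n) \<Rightarrow> 'n op set" where
  "GO e es = {(\<Sum>k\<in>UNIV. cscale (c k) (ketbra (e (\<sigma> k)) (es k))) | \<sigma> c.
               \<sigma> permutes (UNIV::'n set) \<and> (\<forall>k. c k \<noteq> 0)}"

definition gO :: "('n::finite \<Rightarrow> complex^'n) \<Rightarrow> ('n \<Rightarrow> complex^'n) \<Rightarrow> 'n op set" where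
  "gO e es = {(\<Sum>k\<in>UNIV. cscale (\<alpha> k) (ketbra (e k) (es k))) | \<alpha>. True}"

text \<open>Q is a vertical tangent vector at P: derivative at 0 of a differentiable curve
  lying in the fiber of P (i.e. the fiber over \<Pi>(P)) and passing through P at time 0.\<close>
definition vertical :: "('n::finite) op set \<Rightarrow> 'n op \<Rightarrow> 'n op \<Rightarrow> bool" where
  "vertical O0 P Q \<longleftrightarrow>
     (\<exists>c \<epsilon> Oc. \<epsilon> > 0 \<and> P \<in> fiber Oc O0 \<and> c 0 = P \<and>
        (\<forall>t\<in>{-\<epsilon><..<\<epsilon>}. c t \<in> fiber Oc O0) \<and>
        (c has_vector_derivative Q) (at 0))"

text \<open>O0-connection (O0 given by the family e, es).\<close>
definition is_connection ::
  "('n::finite \<Rightarrow> complex^'n) \<Rightarrow> ('n \<Rightarrow> complex^'n) \<Rightarrow> ('n op \<Rightarrow> 'n op \<Rightarrow> 'n op) \<Rightarrow> bool" where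
  "is_connection e es \<Omega> \<longleftrightarrow>
     (\<forall>P\<in>invops. \<forall>Q. \<Omega> P Q \<in> gO e es) \<and>
     (\<forall>P\<in>invops. \<forall>Q R. \<Omega> P (Q + R) = \<Omega> P Q + \<Omega> P R) \<and>
     (\<forall>P\<in>invops. \<forall>c Q. \<Omega> P (cscale c Q) = cscale c (\<Omega> P Q)) \<and>
     (\<forall>P\<in>invops. \<forall>Q. vertical (range (\<lambda>k. ketbra (e k) (es k))) P Q
         \<longrightarrow> \<Omega> P Q = matrix_inv P ** Q) \<and>
     (\<forall>Ps Qs P0 Q0. (\<forall>k. Ps k \<in> invops) \<and> P0 \<in> invops \<and>
         Ps \<longlonglongrightarrow> P0 \<and> Qs \<longlonglongrightarrow> Q0 \<longrightarrow>
         (\<lambda>k. \<Omega> (Ps k) (Qs k)) \<longlonglongrightarrow> \<Omega> P0 Q0) \<and>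
     (\<forall>G\<in>GO e es. \<forall>P\<in>invops. \<forall>Q.
         \<Omega> (P ** G) (Q ** G) = matrix_inv G ** \<Omega> P Q ** G)"

text \<open>O0-lift of the curve Oc on [0,\<tau>].\<close>
definition is_lift :: "'n op set \<Rightarrow> real \<Rightarrow> (real \<Rightarrow> ('n::finite) op set) \<Rightarrow> (real \<Rightarrow> 'n op) \<Rightarrow> bool" where
  "is_lift O0 \<tau> Oc V \<longleftrightarrow> continuous_on {0..\<tau>} V \<and> (\<forall>t\<in>{0..\<tau>}. V t \<in> fiber (Oc t) O0)"

text \<open>Smooth lift: continuously differentiable on [0,\<tau>] (one-sided at the end points).\<close>
definition is_smooth_lift :: "'n op set \<Rightarrow> real \<Rightarrow> (real \<Rightarrow> ('n::finite) op set) \<Rightarrow> (real \<Rightarrow> 'n op) \<Rightarrow> bool" where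
  "is_smooth_lift O0 \<tau> Oc V \<longleftrightarrow> is_lift O0 \<tau> Oc V \<and>
     (\<exists>V'. (\<forall>t\<in>{0..\<tau>}. (V has_vector_derivative V' t) (at t within {0..\<tau>})) \<and>
           continuous_on {0..\<tau>} V')"

definition is_horizontal_lift ::
  "('n::finite \<Rightarrow> complex^'n) \<Rightarrow> ('n \<Rightarrow> complex^'n) \<Rightarrow> ('n op \<Rightarrow> 'n op \<Rightarrow> 'n op) \<Rightarrow>
   real \<Rightarrow> (real \<Rightarrow> 'n op set) \<Rightarrow> (real \<Rightarrow> 'n op) \<Rightarrow> bool" where
  "is_horizontal_lift e es \<Omega> \<tau> Oc V \<longleftrightarrow>
     is_smooth_lift (range (\<lambda>k. ketbra (e k) (es k))) \<tau> Oc V \<and>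
     (\<forall>t\<in>{0..\<tau>}. \<Omega> (V t) (vector_derivative V (at t within {0..\<tau>})) = 0)"

end

theory Submission
  imports Defs
begin



lemma bilinear_mmult: "bilinear ((**) :: complex^'n::finite^'n \<Rightarrow> complex^'n^'n \<Rightarrow> complex^'n^'n)"
  unfolding bilinear_def
  by (auto intro!: linearI simp: vec_eq_iff matrix_matrix_mult_def sum.distrib scaleR_sum_right
      distrib_left distrib_right)

lemma bb_mmult: "bounded_bilinear ((**) :: complex^'n::finite^'n \<Rightarrow> complex^'n^'n \<Rightarrow> complex^'n^'n)"
  using bilinear_mmult bilinear_conv_bounded_bilinear by blast

lemma bl_cscale: "bounded_linear (\<lambda>z::complex. cscale z (M::'n::finite op))"
  unfolding linear_conv_bounded_linear[symmetric]
  by (auto intro!: linearI simp: vec_eq_iff cscale_def distrib_right)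

lemma continuous_det:
  fixes F :: "'a::topological_space \<Rightarrow> complex^'n::finite^'n"
  assumes "continuous_on S F"
  shows "continuous_on S (\<lambda>x. det (F x))"
  unfolding det_def
  by (intro continuous_intros assms)



lemma minv_props:
  fixes A :: "complex^'n::finite^'n"
  assumes "invertible A"
  shows "A ** matrix_inv A = mat 1" "matrix_inv A ** A = mat 1"
proof -
  from assms obtain B where "A ** B = mat 1 \<and> B ** A = mat 1" unfolding invertible_def by blast
  hence "A ** matrix_inv A = mat 1 \<and> matrix_inv A ** A = mat 1"
    unfolding matrix_inv_def by (rule someI)
  thus "A ** matrix_inv A = mat 1" "matrix_inv A ** A = mat 1" by auto
qed

lemma minv_unique:
  fixes A B :: "complex^'n::finite^'n"
  assumes "A ** B = mat 1"
  shows "matrix_inv A = B"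
proof -
  have inv: "invertible A" using assms invertible_right_inverse by blast
  have "matrix_inv A = matrix_inv A ** (A ** B)" using assms by simp
  also have "\<dots> = B" by (simp add: matrix_mul_assoc minv_props[OF inv])
  finally show ?thesis .
qed

lemma invertible_minv:
  fixes A :: "complex^'n::finite^'n"
  assumes "invertible A" shows "invertible (matrix_inv A)"
  using minv_props[OF assms] invertible_def by blast

lemma minv_mult:
  fixes A B :: "complex^'n::finite^'n"
  assumes "invertible A" "invertible B"
  shows "matrix_inv (A ** B) = matrix_inv B ** matrix_inv A"
  apply (rule minv_unique)
  by (metis assms matrix_mul_assoc matrix_mul_rid minv_props(1))

definition cram :: "complex^'n::finite^'n \<Rightarrow> complex^'n^'n" where
  "cram A = (\<chi> i j. det (\<chi> r c. if c = i then (if r = j then 1 else 0) else A$r$c) / det A)"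

lemma minv_cram:
  fixes A :: "complex^'n::finite^'n"
  assumes "det A \<noteq> 0"
  shows "matrix_inv A = cram A"
proof -
  have inv: "invertible A" using assms invertible_det_nz by blast
  show ?thesis
  proof (subst vec_eq_iff, intro allI, subst vec_eq_iff, intro allI)
    fix i j
    define x where "x = matrix_inv A *v axis j 1"
    have "A *v x = axis j 1" unfolding x_def
      by (simp add: matrix_vector_mul_assoc minv_props[OF inv])
    hence xe: "x = (\<chi> k. det(\<chi> r c. if c=k then (axis j 1 :: complex^'n)$r else A$r$c) / det A)"
      using cramer[OF assms] by blast
    have ax: "\<And>r. (axis j 1 :: complex^'n) $ r = (if r = j then 1 else 0)" by (simp add: axis_def)
    have "x $ i = cram A $ i $ j" by (subst xe) (simp only: ax cram_def vec_lambda_beta)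
    moreover have "x $ i = matrix_inv A $ i $ j"
      unfolding x_def by (simp add: matrix_vector_mult_def axis_def if_distrib cong: if_cong)
    ultimately show "matrix_inv A $ i $ j = cram A $ i $ j" by simp
  qed
qed

lemma continuous_det':
  fixes F :: "'a::topological_space \<Rightarrow> complex^'n::finite^'n"
  assumes "continuous_on S F"
  shows "continuous_on S (\<lambda>x. det (F x))"
  unfolding det_def
  by (intro continuous_intros assms)

lemma open_detnz: "open {A :: complex^'n::finite^'n. det A \<noteq> 0}"
proof -
  have "continuous_on UNIV (\<lambda>A :: complex^'n^'n. det A)"
    by (rule continuous_det') (rule continuous_on_id)
  hence "open ((\<lambda>A :: complex^'n^'n. det A) -` (- {0}))"
    by (intro open_vimage) (auto simp: open_Compl)
  thus ?thesis by (simp add: vimage_def Compl_eq)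
qed

lemma continuous_on_if_const[continuous_intros]:
  "continuous_on S f \<Longrightarrow> continuous_on S (\<lambda>x. if P then a else f x)"
  by (cases P) auto

lemma cont_cram: "continuous_on {A :: complex^'n::finite^'n. det A \<noteq> 0} cram"
  unfolding cram_def
  by (intro continuous_intros continuous_det') auto

lemma isCont_minv:
  fixes X :: "complex^'n::finite^'n"
  assumes "invertible X"
  shows "isCont matrix_inv X"
proof -
  have "continuous_on {A :: complex^'n::finite^'n. det A \<noteq> 0} matrix_inv"
    using cont_cram by (rule continuous_on_eq) (simp add: minv_cram)
  thus ?thesis using continuous_on_eq_continuous_at[OF open_detnz] assms invertible_det_nz by blast
qed

lemma minv_diff:
  fixes X Y :: "complex^'n::finite^'n"
  assumes "invertible X" "invertible Y"
  shows "matrix_inv Y - matrix_inv X = - (matrix_inv Y ** (Y - X) ** matrix_inv X)"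
proof -
  have "matrix_inv Y ** (Y - X) ** matrix_inv X = matrix_inv Y ** Y ** matrix_inv X - matrix_inv Y ** X ** matrix_inv X"
    by (simp add: bounded_bilinear.diff_right[OF bb_mmult] bounded_bilinear.diff_left[OF bb_mmult])
  also have "\<dots> = matrix_inv X - matrix_inv Y"
    by (metis assms matrix_mul_assoc matrix_mul_lid matrix_mul_rid minv_props)
  finally show ?thesis by simp
qed






lemma has_derivative_minv:
  fixes X :: "complex^'n::finite^'n"
  assumes X: "invertible X"
  shows "(matrix_inv has_derivative (\<lambda>h. - (matrix_inv X ** h ** matrix_inv X))) (at X within S)"
proof -
  obtain K where K0: "K > 0" and K1: "\<forall>(a::complex^'n^'n) (b::complex^'n^'n). norm (a ** b) \<le> norm a * norm b * K"
  proof -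
    have "\<exists>K>0. \<forall>(a::complex^'n^'n) (b::complex^'n^'n). norm (a ** b) \<le> norm a * norm b * K"
      by (rule bounded_bilinear.pos_bounded[OF bb_mmult])
    thus ?thesis using that by blast
  qed
  have K: "K > 0" "\<And>(a::complex^'n^'n) (b::complex^'n^'n). norm (a ** b) \<le> norm a * norm b * K"
    using K0 K1 by auto
  have "X \<in> {A :: complex^'n::finite^'n. det A \<noteq> 0}" using X invertible_det_nz by blast
  hence "\<exists>e>0. ball X e \<subseteq> {A :: complex^'n::finite^'n. det A \<noteq> 0}"
    using open_detnz[unfolded open_contains_ball] by (rule bspec[rotated])
  then obtain e where e: "e > 0" "ball X e \<subseteq> {A :: complex^'n::finite^'n. det A \<noteq> 0}"
    by blast
  let ?H = "\<lambda>Y. norm (matrix_inv Y - matrix_inv X) * norm (matrix_inv X) * K * K"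
  show ?thesis
  proof (rule has_derivativeI_sandwich[where e=e and H="?H"])
    show "0 < e" by fact
    show "bounded_linear (\<lambda>h. - (matrix_inv X ** h ** matrix_inv X))"
      by (rule bounded_linear_minus, rule bounded_linear_compose[OF bounded_bilinear.bounded_linear_left[OF bb_mmult]
          bounded_bilinear.bounded_linear_right[OF bb_mmult]])
  next
    fix y assume y: "y \<in> S" "y \<noteq> X" "dist y X < e"
    have "y \<in> ball X e" using y by (simp add: dist_commute)
    hence iy: "invertible y" using e invertible_det_nz by blast
    have eq: "matrix_inv y - matrix_inv X - - (matrix_inv X ** (y - X) ** matrix_inv X)
        = - ((matrix_inv y - matrix_inv X) ** (y - X) ** matrix_inv X)"
    proof -
      have d: "(matrix_inv y - matrix_inv X) ** (y - X) ** matrix_inv X = matrix_inv y ** (y - X) ** matrix_inv X - matrix_inv X ** (y - X) ** matrix_inv X"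
        by (simp add: bounded_bilinear.diff_left[OF bb_mmult])
      show ?thesis unfolding d unfolding minv_diff[OF X iy] by simp
    qed
    have "norm ((matrix_inv y - matrix_inv X) ** (y - X) ** matrix_inv X)
        \<le> norm ((matrix_inv y - matrix_inv X) ** (y - X)) * norm (matrix_inv X) * K" by (rule K)
    also have "\<dots> \<le> (norm (matrix_inv y - matrix_inv X) * norm (y - X) * K) * norm (matrix_inv X) * K"
      using K by (intro mult_right_mono) auto
    finally have "norm ((matrix_inv y - matrix_inv X) ** (y - X) ** matrix_inv X)
        \<le> ?H y * norm (y - X)" by (simp add: ac_simps)
    moreover have "norm (y - X) > 0" using y by simp
    ultimately show "norm (matrix_inv y - matrix_inv X - - (matrix_inv X ** (y - X) ** matrix_inv X)) / norm (y - X) \<le> ?H y"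
      unfolding eq norm_minus_cancel by (simp add: divide_le_eq)
  next
    have "(matrix_inv \<longlongrightarrow> matrix_inv X) (at X within S)"
      using isCont_minv[OF X] continuous_at_imp_continuous_at_within continuous_within by blast
    hence "((\<lambda>Y. norm (matrix_inv Y - matrix_inv X)) \<longlongrightarrow> 0) (at X within S)"
      by (simp add: LIM_zero_iff tendsto_norm_zero)
    thus "(?H \<longlongrightarrow> 0) (at X within S)"
      by (intro tendsto_mult_left_zero)
  qed
qed

lemma has_vector_derivative_minv:
  fixes V :: "real \<Rightarrow> complex^'n::finite^'n"
  assumes "(V has_vector_derivative V') (at t within S)" "invertible (V t)"
  shows "((\<lambda>s. matrix_inv (V s)) has_vector_derivative
           - (matrix_inv (V t) ** V' ** matrix_inv (V t))) (at t within S)"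
  using has_derivative_compose[OF assms(1)[unfolded has_vector_derivative_def]
      has_derivative_minv[OF assms(2)]]
  unfolding has_vector_derivative_def
  by (simp add: bounded_bilinear.scaleR_left[OF bb_mmult] bounded_bilinear.scaleR_right[OF bb_mmult])





definition Mn :: "('n::finite \<Rightarrow> 'n) \<Rightarrow> ('n \<Rightarrow> complex) \<Rightarrow> complex^'n^'n" where
  "Mn \<sigma> g = (\<chi> i j. if i = \<sigma> j then g j else 0)"

definition Uk :: "'n::finite \<Rightarrow> 'n \<Rightarrow> complex^'n^'n" where
  "Uk a b = (\<chi> i j. if i = a \<and> j = b then 1 else 0)"

lemma Mn_mult: "Mn \<sigma> g ** Mn \<tau> h = Mn (\<sigma> \<circ> \<tau>) (\<lambda>j. g (\<tau> j) * h j)"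
proof -
  have *: "(\<Sum>k\<in>UNIV. (if i = \<sigma> k then g k else 0) * (if k = \<tau> j then h j else 0))
     = (if i = \<sigma> (\<tau> j) then g (\<tau> j) * h j else 0)" for i j
  proof -
    have "(\<Sum>k\<in>UNIV. (if i = \<sigma> k then g k else 0) * (if k = \<tau> j then h j else 0))
      = (\<Sum>k\<in>UNIV. if k = \<tau> j then (if i = \<sigma> (\<tau> j) then g (\<tau> j) * h j else 0) else 0)"
      by (rule sum.cong) auto
    thus ?thesis by simp
  qed
  show ?thesis by (simp add: Mn_def vec_eq_iff matrix_matrix_mult_def *)
qed

lemma Mn_id_one: "Mn id (\<lambda>_. 1) = mat 1"
  by (simp add: Mn_def mat_def vec_eq_iff)

lemma Mn_add: "Mn \<sigma> g + Mn \<sigma> h = Mn \<sigma> (\<lambda>j. g j + h j)"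
  by (simp add: Mn_def vec_eq_iff)

lemma Mn_zero: "Mn \<sigma> (\<lambda>_. 0) = 0"
  by (simp add: Mn_def vec_eq_iff)

lemma Uk_Mn: "Uk k k = Mn id (\<lambda>j. if j = k then 1 else 0)"
  by (auto simp: Mn_def Uk_def vec_eq_iff)

lemma Uk_inj: assumes "Uk a a = Uk b b" shows "a = b"
proof -
  have "Uk a a $ a $ a = Uk b b $ a $ a" using assms by simp
  thus ?thesis by (simp add: Uk_def split: if_splits)
qed

lemma Mn_sum: "Mn \<sigma> g = (\<Sum>k\<in>UNIV. cscale (g k) (Uk (\<sigma> k) k))"
proof -
  have *: "(\<Sum>k\<in>UNIV. g k * (if i = \<sigma> k \<and> j = k then 1 else 0))
     = (if i = \<sigma> j then g j else 0)" for i j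
  proof -
    have "(\<Sum>k\<in>UNIV. g k * (if i = \<sigma> k \<and> j = k then 1 else 0))
      = (\<Sum>k\<in>UNIV. if k = j then (if i = \<sigma> j then g j else 0) else 0)"
      by (rule sum.cong) auto
    thus ?thesis by simp
  qed
  show ?thesis by (simp add: vec_eq_iff Mn_def Uk_def cscale_def *)
qed

lemma Mn_inv:
  assumes "\<sigma> permutes UNIV" "\<forall>k. g k \<noteq> 0"
  shows "Mn \<sigma> g ** Mn (inv \<sigma>) (\<lambda>j. 1 / g (inv \<sigma> j)) = mat 1"
    "Mn (inv \<sigma>) (\<lambda>j. 1 / g (inv \<sigma> j)) ** Mn \<sigma> g = mat 1"
proof -
  have "Mn \<sigma> g ** Mn (inv \<sigma>) (\<lambda>j. 1 / g (inv \<sigma> j)) = Mn id (\<lambda>_. 1)"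
    unfolding Mn_mult permutes_inv_o(1)[OF assms(1)] using assms(2) by simp
  thus "Mn \<sigma> g ** Mn (inv \<sigma>) (\<lambda>j. 1 / g (inv \<sigma> j)) = mat 1" by (simp only: Mn_id_one)
  have "Mn (inv \<sigma>) (\<lambda>j. 1 / g (inv \<sigma> j)) ** Mn \<sigma> g = Mn id (\<lambda>_. 1)"
    unfolding Mn_mult permutes_inv_o(2)[OF assms(1)] permutes_inverses(2)[OF assms(1)] using assms(2) by simp
  thus "Mn (inv \<sigma>) (\<lambda>j. 1 / g (inv \<sigma> j)) ** Mn \<sigma> g = mat 1" by (simp only: Mn_id_one)
qed

lemma cscale_mult_left: "cscale c A ** B = cscale c (A ** B)"
  by (simp add: vec_eq_iff cscale_def matrix_matrix_mult_def sum_distrib_left ac_simps)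

lemma cscale_mult_right: "A ** cscale c B = cscale c (A ** B)"
  by (simp add: vec_eq_iff cscale_def matrix_matrix_mult_def sum_distrib_left ac_simps)

lemma sum_mult_left: "(\<Sum>k\<in>S. (A k::complex^'n::finite^'n)) ** (B::complex^'n::finite^'n) = (\<Sum>k\<in>S. A k ** B)"
  by (rule bounded_bilinear.sum_left[OF bb_mmult])

lemma sum_mult_right: "(B::complex^'n::finite^'n) ** (\<Sum>k\<in>S. (A k::complex^'n^'n)) = (\<Sum>k\<in>S. B ** A k)"
  by (rule bounded_bilinear.sum_right[OF bb_mmult])

lemma cscale_sum: "cscale c (\<Sum>k\<in>S. A k) = (\<Sum>k\<in>S. cscale c (A k))"
  by (induction S rule: infinite_finite_induct) (auto simp: cscale_def vec_eq_iff distrib_left)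

lemma cscale_add: "cscale c (A + B) = cscale c A + cscale c B"
  by (auto simp: cscale_def vec_eq_iff distrib_left)

lemma cscale_zero[simp]: "cscale c 0 = 0"
  by (auto simp: cscale_def vec_eq_iff)

locale cdf =
  fixes e es :: "'n::finite \<Rightarrow> complex^'n"
  assumes cd: "is_cd_family e es"
begin

definition "E = (\<chi> i k. e k $ i)"
definition "Ei = (\<chi> k i. cnj (es k $ i))"
definition "Tr M = E ** M ** Ei"

lemma E_Ei: "E ** Ei = mat 1"
proof -
  have "(\<Sum>k\<in>UNIV. ketbra (e k) (es k)) = mat 1" using cd unfolding is_cd_family_def by blast
  thus ?thesis
    by (simp add: vec_eq_iff E_def Ei_def matrix_matrix_mult_def ketbra_def)
qed

lemma Ei_E: "Ei ** E = mat 1"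
proof -
  have "\<forall>k l. braket (es k) (e l) = (if k = l then 1 else 0)" using cd unfolding is_cd_family_def by blast
  thus ?thesis
    by (simp add: vec_eq_iff E_def Ei_def matrix_matrix_mult_def braket_def mat_def)
qed

lemma EiEX: "Ei ** (E ** X) = X" by (simp add: matrix_mul_assoc Ei_E)
lemma EEiX: "E ** (Ei ** X) = X" by (simp add: matrix_mul_assoc E_Ei)

lemma Tr_mult: "Tr A ** Tr B = Tr (A ** B)"
  unfolding Tr_def by (simp add: matrix_mul_assoc[symmetric] EiEX)

lemma Tr_one: "Tr (mat 1) = mat 1"
  unfolding Tr_def by (simp add: E_Ei)

lemma Tr_inj: "Tr A = Tr B \<Longrightarrow> A = B"
proof -
  assume "Tr A = Tr B"
  hence "Ei ** Tr A ** E = Ei ** Tr B ** E" by simp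
  thus "A = B" unfolding Tr_def by (simp add: matrix_mul_assoc[symmetric] EiEX Ei_E)
qed

definition "Tri M = Ei ** M ** E"

lemma Tr_Tri: "Tr (Tri M) = M"
  unfolding Tr_def Tri_def by (simp add: matrix_mul_assoc[symmetric] EEiX E_Ei)

lemma Tr_ketbra: "Tr (Uk a b) = ketbra (e a) (es b)"
proof -
  have 1: "E ** Uk a b = (\<chi> i j. if j = b then e a $ i else 0)"
  proof -
    have "(\<Sum>k\<in>UNIV. e k $ i * (if k = a \<and> j = b then 1 else 0)) = (if j = b then e a $ i else 0)" for i j
    proof -
      have "(\<Sum>k\<in>UNIV. e k $ i * (if k = a \<and> j = b then 1 else 0)) = 
        (\<Sum>k\<in>UNIV. if k = a then (if j = b then e a $ i else 0) else 0)"
        by (rule sum.cong) auto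
      thus ?thesis by simp
    qed
    thus ?thesis by (simp add: vec_eq_iff E_def Uk_def matrix_matrix_mult_def)
  qed
  have 2: "(\<Sum>k\<in>UNIV. (if k = b then e a $ i else 0) * cnj (es k $ j)) = e a $ i * cnj (es b $ j)" for i j
  proof -
    have "(\<Sum>k\<in>UNIV. (if k = b then e a $ i else 0) * cnj (es k $ j)) = 
        (\<Sum>k\<in>UNIV. if k = b then e a $ i * cnj (es b $ j) else 0)"
      by (rule sum.cong) auto
    thus ?thesis by simp
  qed
  show ?thesis unfolding Tr_def 1 by (simp add: vec_eq_iff Ei_def ketbra_def matrix_matrix_mult_def 2)
qed

lemma Tr_cscale: "Tr (cscale c A) = cscale c (Tr A)"
  unfolding Tr_def by (simp add: cscale_mult_left cscale_mult_right)

lemma Tr_sum: "Tr (\<Sum>k\<in>S. A k) = (\<Sum>k\<in>S. Tr (A k))"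
  unfolding Tr_def by (simp add: sum_mult_left sum_mult_right)

lemma Tr_add: "Tr (A + B) = Tr A + Tr B"
  unfolding Tr_def by (simp add: bounded_bilinear.add_left[OF bb_mmult] bounded_bilinear.add_right[OF bb_mmult])

lemma Tr_zero: "Tr 0 = 0"
  unfolding Tr_def by (simp add: vec_eq_iff matrix_matrix_mult_def)

lemma Tr_Mn: "Tr (Mn \<sigma> g) = (\<Sum>k\<in>UNIV. cscale (g k) (ketbra (e (\<sigma> k)) (es k)))"
  by (simp add: Mn_sum Tr_sum Tr_cscale Tr_ketbra)

lemma O0_eq: "range (\<lambda>k. ketbra (e k) (es k)) = range (\<lambda>k. Tr (Uk k k))"
  by (simp add: Tr_ketbra)

lemma GO_eq: "GO e es = {Tr (Mn \<sigma> c) | \<sigma> c. \<sigma> permutes (UNIV::'n set) \<and> (\<forall>k. c k \<noteq> 0)}"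
  unfolding GO_def Tr_Mn by (rule refl)

lemma gO_eq: "gO e es = {Tr (Mn id \<alpha>) | \<alpha>. True}"
  unfolding gO_def Tr_Mn by simp

end




context cdf begin

abbreviation "Ozero \<equiv> range (\<lambda>k. ketbra (e k) (es k))"

definition nrm :: "complex^'n^'n \<Rightarrow> bool" where
  "nrm M \<longleftrightarrow> invertible M \<and> (\<lambda>a. matrix_inv M ** a ** M) ` Ozero = Ozero"

lemma Mn_conj_Uk:
  assumes \<sigma>: "\<sigma> permutes UNIV" and c: "\<forall>k. c k \<noteq> 0"
  shows "Mn (inv \<sigma>) (\<lambda>j. 1 / c (inv \<sigma> j)) ** Uk k k ** Mn \<sigma> c = Uk (inv \<sigma> k) (inv \<sigma> k)"
proof -
  have "Mn (inv \<sigma>) (\<lambda>j. 1 / c (inv \<sigma> j)) ** Uk k k ** Mn \<sigma> c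
      = Mn (inv \<sigma> \<circ> id \<circ> \<sigma>) (\<lambda>j. 1 / c (inv \<sigma> (id (\<sigma> j))) * (if \<sigma> j = k then 1 else 0) * c j)"
    unfolding Uk_Mn Mn_mult by simp
  also have "\<dots> = Mn id (\<lambda>j. if j = inv \<sigma> k then 1 else 0)"
    using c by (intro arg_cong2[where f="Mn"] ext)
      (auto simp: permutes_inverses[OF \<sigma>] permutes_inv_o(2)[OF \<sigma>])
  finally show ?thesis by (simp add: Uk_Mn)
qed

lemma GO_inv:
  assumes \<sigma>: "\<sigma> permutes UNIV" and c: "\<forall>k. c k \<noteq> 0"
  shows "invertible (Tr (Mn \<sigma> c))"
    "matrix_inv (Tr (Mn \<sigma> c)) = Tr (Mn (inv \<sigma>) (\<lambda>j. 1 / c (inv \<sigma> j)))"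
proof -
  have 1: "Tr (Mn \<sigma> c) ** Tr (Mn (inv \<sigma>) (\<lambda>j. 1 / c (inv \<sigma> j))) = mat 1"
    unfolding Tr_mult Mn_inv(1)[OF \<sigma> c] Tr_one ..
  thus "invertible (Tr (Mn \<sigma> c))" using invertible_right_inverse by blast
  show "matrix_inv (Tr (Mn \<sigma> c)) = Tr (Mn (inv \<sigma>) (\<lambda>j. 1 / c (inv \<sigma> j)))"
    by (rule minv_unique[OF 1])
qed

lemma GO_nrm:
  assumes "G \<in> GO e es" shows "nrm G"
proof -
  from assms obtain \<sigma> c where G: "G = Tr (Mn \<sigma> c)" and \<sigma>: "\<sigma> permutes UNIV" and c: "\<forall>k. c k \<noteq> 0"
    unfolding GO_eq by blast
  have conj: "matrix_inv G ** ketbra (e k) (es k) ** G = ketbra (e (inv \<sigma> k)) (es (inv \<sigma> k))" for k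
    unfolding G GO_inv(2)[OF \<sigma> c] Tr_ketbra[symmetric] Tr_mult by (simp only: Mn_conj_Uk[OF \<sigma> c])
  have "(\<lambda>a. matrix_inv G ** a ** G) ` Ozero = range (\<lambda>k. ketbra (e (inv \<sigma> k)) (es (inv \<sigma> k)))"
    by (auto simp: image_image conj)
  also have "\<dots> = Ozero"
  proof -
    have "surj (inv \<sigma>)" using permutes_inv[OF \<sigma>] permutes_surj by blast
    have eq: "(\<lambda>k. ketbra (e (inv \<sigma> k)) (es (inv \<sigma> k))) = (\<lambda>k. ketbra (e k) (es k)) \<circ> inv \<sigma>"
      by (simp add: o_def)
    show ?thesis unfolding eq image_comp[symmetric] using \<open>surj (inv \<sigma>)\<close> by simp
  qed
  finally show ?thesis unfolding nrm_def using GO_inv(1)[OF \<sigma> c] G by simp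
qed

lemma nrm_GO:
  assumes "nrm M" shows "M \<in> GO e es"
proof -
  have invM: "invertible M" and img: "(\<lambda>a. matrix_inv M ** a ** M) ` Ozero = Ozero"
    using assms unfolding nrm_def by auto
  define N where "N = Tri M"
  have MN: "M = Tr N" unfolding N_def Tr_Tri ..
  define Ni where "Ni = Tri (matrix_inv M)"
  have NiN: "Ni ** N = mat 1"
    by (rule Tr_inj) (simp add: Ni_def N_def Tr_Tri Tr_mult[symmetric] Tr_one minv_props[OF invM])
  have colnz: "\<exists>r. N $ r $ j \<noteq> 0" for j
  proof (rule ccontr)
    assume "\<not> (\<exists>r. N $ r $ j \<noteq> 0)"
    hence "(Ni ** N) $ j $ j = 0" by (simp add: matrix_matrix_mult_def)
    thus False using NiN by (simp add: mat_def)
  qed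
  have "\<exists>j. matrix_inv M ** ketbra (e k) (es k) ** M = ketbra (e j) (es j)" for k
  proof -
    have "matrix_inv M ** ketbra (e k) (es k) ** M \<in> (\<lambda>a. matrix_inv M ** a ** M) ` Ozero" by blast
    thus ?thesis using img by auto
  qed
  then obtain \<pi> where \<pi>: "\<And>k. matrix_inv M ** ketbra (e k) (es k) ** M = ketbra (e (\<pi> k)) (es (\<pi> k))"
    by metis
  have comm: "Uk k k ** N = N ** Uk (\<pi> k) (\<pi> k)" for k
  proof -
    have "M ** (matrix_inv M ** ketbra (e k) (es k) ** M) = ketbra (e k) (es k) ** M"
      by (simp add: matrix_mul_assoc minv_props[OF invM])
    hence "ketbra (e k) (es k) ** M = M ** ketbra (e (\<pi> k)) (es (\<pi> k))" using \<pi>[of k] by simp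
    hence "Tr (Uk k k ** N) = Tr (N ** Uk (\<pi> k) (\<pi> k))"
      by (simp add: MN Tr_ketbra[symmetric] Tr_mult)
    thus ?thesis by (rule Tr_inj)
  qed
  have colsupp: "N $ r $ \<pi> k = 0" if "r \<noteq> k" for r k
  proof -
    have "(Uk k k ** N) $ r $ \<pi> k = (N ** Uk (\<pi> k) (\<pi> k)) $ r $ \<pi> k" using comm by simp
    moreover have "(Uk k k ** N) $ r $ \<pi> k = 0"
      using that by (simp add: matrix_matrix_mult_def Uk_def)
    moreover have "(N ** Uk (\<pi> k) (\<pi> k)) $ r $ \<pi> k = N $ r $ \<pi> k"
    proof -
      have "(\<Sum>l\<in>UNIV. N $ r $ l * (if l = \<pi> k \<and> \<pi> k = \<pi> k then 1 else 0)) =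
            (\<Sum>l\<in>UNIV. if l = \<pi> k then N $ r $ \<pi> k else 0)"
        by (rule sum.cong) auto
      thus ?thesis by (simp add: matrix_matrix_mult_def Uk_def)
    qed
    ultimately show ?thesis by simp
  qed
  have injpi: "inj \<pi>"
  proof (rule injI)
    fix k k' assume eq: "\<pi> k = \<pi> k'"
    show "k = k'"
    proof (rule ccontr)
      assume "k \<noteq> k'"
      have "N $ r $ \<pi> k = 0" for r
        using colsupp[of r k] colsupp[of r k'] eq \<open>k \<noteq> k'\<close> by (cases "r = k") auto
      thus False using colnz[of "\<pi> k"] by blast
    qed
  qed
  have pi_perm: "\<pi> permutes UNIV"
    using injpi finite_UNIV_inj_surj[OF _ injpi]
    by (intro bij_imp_permutes) (auto simp: bij_def bij_betw_def)
  define \<sigma> where "\<sigma> = inv \<pi>"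
  have \<sigma>: "\<sigma> permutes UNIV" unfolding \<sigma>_def by (rule permutes_inv[OF pi_perm])
  have pisig: "\<pi> (\<sigma> j) = j" for j unfolding \<sigma>_def by (rule permutes_inverses(1)[OF pi_perm])
  define c where "c j = N $ \<sigma> j $ j" for j
  have NMn: "N = Mn \<sigma> c"
  proof -
    have "N $ r $ j = (if r = \<sigma> j then c j else 0)" for r j
      using colsupp[of r "\<sigma> j"] by (auto simp: c_def pisig)
    thus ?thesis by (simp add: Mn_def vec_eq_iff)
  qed
  have c: "c k \<noteq> 0" for k
  proof
    assume "c k = 0"
    hence "N $ r $ k = 0" for r using NMn by (simp add: Mn_def)
    thus False using colnz[of k] by blast
  qed
  show ?thesis unfolding GO_eq MN NMn using \<sigma> c by blast
qed

lemma fiber_mult_nrm: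
  assumes P: "P \<in> fiber Oc Ozero" and M: "nrm M"
  shows "P ** M \<in> fiber Oc Ozero"
proof -
  have iP: "invertible P" and fP: "(\<lambda>a. matrix_inv P ** a ** P) ` Oc = Ozero" using P unfolding fiber_def by auto
  have iM: "invertible M" and fM: "(\<lambda>a. matrix_inv M ** a ** M) ` Ozero = Ozero" using M unfolding nrm_def by auto
  have inv: "matrix_inv (P ** M) = matrix_inv M ** matrix_inv P" by (rule minv_mult[OF iP iM])
  have "(\<lambda>a. matrix_inv (P ** M) ** a ** (P ** M)) ` Oc
      = (\<lambda>a. matrix_inv M ** a ** M) ` ((\<lambda>a. matrix_inv P ** a ** P) ` Oc)"
    unfolding inv image_image by (simp add: matrix_mul_assoc)
  also have "\<dots> = Ozero" using fP fM by simp
  finally show ?thesis unfolding fiber_def using invertible_mult[OF iP iM] by blast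
qed

lemma fiber_quot_nrm:
  assumes V: "V \<in> fiber Oc Ozero" and W: "W \<in> fiber Oc Ozero"
  shows "nrm (matrix_inv V ** W)"
proof -
  have iV: "invertible V" and fV: "(\<lambda>a. matrix_inv V ** a ** V) ` Oc = Ozero" using V unfolding fiber_def by auto
  have iW: "invertible W" and fW: "(\<lambda>a. matrix_inv W ** a ** W) ` Oc = Ozero" using W unfolding fiber_def by auto
  have iVi: "invertible (matrix_inv V)" by (rule invertible_minv[OF iV])
  have inv: "matrix_inv (matrix_inv V ** W) = matrix_inv W ** V"
    by (rule minv_unique) (metis iV iW matrix_mul_assoc matrix_mul_rid minv_props)
  have "(\<lambda>a. matrix_inv (matrix_inv V ** W) ** a ** (matrix_inv V ** W)) ` Ozero
     = (\<lambda>a. matrix_inv W ** (V ** a ** matrix_inv V) ** W) ` Ozero"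
    unfolding inv by (simp add: matrix_mul_assoc)
  also have "\<dots> = (\<lambda>a. matrix_inv W ** (V ** a ** matrix_inv V) ** W) ` ((\<lambda>a. matrix_inv V ** a ** V) ` Oc)"
    using fV by simp
  also have "\<dots> = (\<lambda>a. matrix_inv W ** a ** W) ` Oc"
  proof -
    have "matrix_inv W ** (V ** (matrix_inv V ** x ** V) ** matrix_inv V) ** W = matrix_inv W ** x ** W" for x
      by (simp add: matrix_mul_assoc[symmetric] minv_props[OF iV] EiEX)
         (simp add: matrix_mul_assoc minv_props[OF iV])
    thus ?thesis unfolding image_image by simp
  qed
  also have "\<dots> = Ozero" by (rule fW)
  finally show ?thesis unfolding nrm_def using invertible_mult[OF iVi iW] by blast
qed

end



lemma hvd_exp: "((\<lambda>s::real. exp (of_real s * (b::complex))) has_vector_derivative (exp (of_real t * b) * b)) (at t within S)"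
proof -
  have "((\<lambda>z. exp (z * b)) has_field_derivative exp (of_real t * b) * b) (at (of_real t))"
    by (auto intro!: derivative_eq_intros)
  from has_vector_derivative_real_field[OF this] show ?thesis by simp
qed

lemma hvd_cscale_sum:
  assumes "\<And>k. ((\<lambda>s. g k s) has_vector_derivative g' k) F"
  shows "((\<lambda>s. \<Sum>k\<in>UNIV. cscale (g k s) (K k :: complex^'n::finite^'n)) has_vector_derivative
           (\<Sum>k\<in>UNIV. cscale (g' k) (K k))) F"
  by (intro has_vector_derivative_sum bounded_linear.has_vector_derivative[OF bl_cscale] assms)

lemma cont_cscale_sum:
  assumes "\<And>k. continuous_on S (g k)"
  shows "continuous_on S (\<lambda>s. \<Sum>k\<in>UNIV. cscale (g k s) (K k :: complex^'n::finite^'n))"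
  by (intro continuous_on_sum bounded_linear.continuous_on[OF bl_cscale] assms)

lemma cont_mmult:
  fixes f g :: "real \<Rightarrow> complex^'n::finite^'n"
  assumes "continuous_on S f" "continuous_on S g"
  shows "continuous_on S (\<lambda>x. f x ** g x)"
  by (rule bilinear_continuous_on_compose[OF assms bilinear_mmult])

context cdf begin

lemma Tri_Tr: "Tri (Tr X) = X"
  unfolding Tr_def Tri_def by (simp add: matrix_mul_assoc[symmetric] EiEX Ei_E)

lemma GO_Mn: "\<sigma> permutes UNIV \<Longrightarrow> \<forall>k. c k \<noteq> 0 \<Longrightarrow> Tr (Mn \<sigma> c) \<in> GO e es"
  unfolding GO_eq by blast

lemma fiber_inv: "P \<in> fiber Oc Ox \<Longrightarrow> invertible P"
  unfolding fiber_def by blast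

lemma vert_diag:
  assumes P: "P \<in> fiber Oc Ozero"
  shows "vertical Ozero P (P ** Tr (Mn id \<beta>))"
proof -
  define c where "c s = P ** Tr (Mn id (\<lambda>k. exp (of_real s * \<beta> k)))" for s :: real
  have fib: "c s \<in> fiber Oc Ozero" for s
    unfolding c_def
    by (intro fiber_mult_nrm[OF P] GO_nrm GO_Mn permutes_id) simp
  have c0: "c 0 = P"
    unfolding c_def by (simp add: Mn_id_one Tr_one)
  have "((\<lambda>s. \<Sum>k\<in>UNIV. cscale (exp (of_real s * \<beta> k)) (ketbra (e (id k)) (es k))) has_vector_derivative
           (\<Sum>k\<in>UNIV. cscale (exp (of_real 0 * \<beta> k) * \<beta> k) (ketbra (e (id k)) (es k)))) (at 0)"
    by (rule hvd_cscale_sum) (rule hvd_exp)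
  hence "((\<lambda>s. Tr (Mn id (\<lambda>k. exp (of_real s * \<beta> k)))) has_vector_derivative Tr (Mn id \<beta>)) (at 0)"
    by (simp add: Tr_Mn)
  hence der: "(c has_vector_derivative P ** Tr (Mn id \<beta>)) (at 0)"
    unfolding c_def by (rule bounded_linear.has_vector_derivative[OF bounded_bilinear.bounded_linear_right[OF bb_mmult]])
  show ?thesis unfolding vertical_def
    by (rule exI[of _ c], rule exI[of _ 1], rule exI[of _ Oc]) (use fib c0 der P in auto)
qed

end

locale conn = cdf e es for e es :: "'n::finite \<Rightarrow> complex^'n" +
  fixes \<Omega> :: "'n op \<Rightarrow> 'n op \<Rightarrow> 'n op"
  assumes conn: "is_connection e es \<Omega>"
begin

lemma \<Omega>_add: "invertible P \<Longrightarrow> \<Omega> P (Q + R) = \<Omega> P Q + \<Omega> P R"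
  using conn unfolding is_connection_def invops_def by blast

lemma \<Omega>_vert: "invertible P \<Longrightarrow> vertical Ozero P Q \<Longrightarrow> \<Omega> P Q = matrix_inv P ** Q"
  using conn unfolding is_connection_def invops_def by blast

lemma \<Omega>_equiv: "G \<in> GO e es \<Longrightarrow> invertible P \<Longrightarrow> \<Omega> (P ** G) (Q ** G) = matrix_inv G ** \<Omega> P Q ** G"
  using conn unfolding is_connection_def invops_def by blast

lemma \<Omega>_gO: "invertible P \<Longrightarrow> \<Omega> P Q \<in> gO e es"
  using conn unfolding is_connection_def invops_def by blast

lemma \<Omega>_seq: "(\<forall>k. invertible (Ps k)) \<Longrightarrow> invertible P0 \<Longrightarrow> Ps \<longlonglongrightarrow> P0 \<Longrightarrow> Qs \<longlonglongrightarrow> Q0 \<Longrightarrow>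
    (\<lambda>k. \<Omega> (Ps k) (Qs k)) \<longlonglongrightarrow> \<Omega> P0 Q0"
  using conn unfolding is_connection_def invops_def by blast

lemma \<Omega>_diag:
  assumes P: "P \<in> fiber Oc Ozero"
  shows "\<Omega> P (P ** Tr (Mn id \<beta>)) = Tr (Mn id \<beta>)"
  using \<Omega>_vert[OF fiber_inv[OF P] vert_diag[OF P]]
  by (simp add: matrix_mul_assoc minv_props[OF fiber_inv[OF P]])

lemma \<Omega>_cont:
  assumes V: "continuous_on S V" and V': "continuous_on S V'" and inv: "\<And>t. t \<in> S \<Longrightarrow> invertible (V t)"
  shows "continuous_on S (\<lambda>t::real. \<Omega> (V t) (V' t))"
proof (rule continuous_on_sequentiallyI)
  fix u a assume u: "\<forall>n. u n \<in> S" "a \<in> S" "u \<longlonglongrightarrow> a"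
  have "(\<lambda>n. V (u n)) \<longlonglongrightarrow> V a"
    using V u continuous_on_sequentially[of S V] by (auto simp: o_def)
  moreover have "(\<lambda>n. V' (u n)) \<longlonglongrightarrow> V' a"
    using V' u continuous_on_sequentially[of S V'] by (auto simp: o_def)
  ultimately show "(\<lambda>n. \<Omega> (V (u n)) (V' (u n))) \<longlonglongrightarrow> \<Omega> (V a) (V' a)"
    using \<Omega>_seq[of "\<lambda>n. V (u n)" "V a"] inv u by auto
qed

end




context conn begin

lemma existence:
  assumes tau: "0 < \<tau>"
    and Vl: "is_lift Ozero \<tau> Oc V"
    and V'd: "\<forall>t\<in>{0..\<tau>}. (V has_vector_derivative V' t) (at t within {0..\<tau>})"
    and V'c: "continuous_on {0..\<tau>} V'"
    and V0: "V0 \<in> fiber (Oc 0) Ozero"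
  shows "\<exists>Vt. is_horizontal_lift e es \<Omega> \<tau> Oc Vt \<and> Vt 0 = V0"
proof -
  let ?I = "{0..\<tau>}"
  have Vc: "continuous_on ?I V" and Vfib: "\<And>t. t \<in> ?I \<Longrightarrow> V t \<in> fiber (Oc t) Ozero"
    using Vl unfolding is_lift_def by auto
  have invV: "\<And>t. t \<in> ?I \<Longrightarrow> invertible (V t)" using Vfib fiber_inv by blast
  define A where "A t = \<Omega> (V t) (V' t)" for t
  have Acont: "continuous_on ?I A" unfolding A_def by (rule \<Omega>_cont[OF Vc V'c invV])
  define \<alpha> where "\<alpha> t k = Tri (A t) $ k $ k" for t k
  have Aeq: "A t = Tr (Mn id (\<alpha> t))" if "t \<in> ?I" for t
  proof -
    have "A t \<in> gO e es" unfolding A_def by (rule \<Omega>_gO[OF invV[OF that]])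
    then obtain a where a: "A t = Tr (Mn id a)" unfolding gO_eq by blast
    have "\<alpha> t = a" unfolding \<alpha>_def a Tri_Tr by (simp add: Mn_def fun_eq_iff)
    thus ?thesis using a by simp
  qed
  have \<alpha>cont: "continuous_on ?I (\<lambda>t. \<alpha> t k)" for k
  proof -
    have "continuous_on ?I (\<lambda>t. Ei ** A t ** E)"
      by (intro cont_mmult Acont continuous_on_const)
    thus ?thesis unfolding \<alpha>_def Tri_def by (intro continuous_on_component)
  qed
  have "nrm (matrix_inv (V 0) ** V0)" by (rule fiber_quot_nrm[OF Vfib V0]) (use tau in auto)
  hence "matrix_inv (V 0) ** V0 \<in> GO e es" by (rule nrm_GO)
  then obtain \<sigma> c where G0: "matrix_inv (V 0) ** V0 = Tr (Mn \<sigma> c)" and \<sigma>: "\<sigma> permutes UNIV"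
    and c: "\<forall>k. c k \<noteq> 0"
    unfolding GO_eq by blast
  define \<gamma> where "\<gamma> k t = integral {0..t} (\<lambda>s. \<alpha> s (\<sigma> k))" for k t
  define g where "g k t = c k * exp (- \<gamma> k t)" for k t
  define g' where "g' k t = - \<alpha> t (\<sigma> k) * g k t" for k t
  have \<gamma>d: "((\<gamma> k) has_vector_derivative \<alpha> t (\<sigma> k)) (at t within ?I)" if "t \<in> ?I" for k t
    unfolding \<gamma>_def by (rule integral_has_vector_derivative[OF \<alpha>cont that])
  have gd: "((g k) has_vector_derivative g' k t) (at t within ?I)" if "t \<in> ?I" for k t
  proof -
    have f: "((\<lambda>t. - \<gamma> k t) has_vector_derivative - \<alpha> t (\<sigma> k)) (at t within ?I)"
      using \<gamma>d[OF that] by (rule has_vector_derivative_minus)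
    have "(exp has_field_derivative exp (- \<gamma> k t)) (at (- \<gamma> k t) within (\<lambda>t. - \<gamma> k t) ` ?I)"
      by (rule has_field_derivative_at_within) (rule DERIV_exp)
    from field_vector_diff_chain_within[OF f this]
    have "((\<lambda>t. exp (- \<gamma> k t)) has_vector_derivative - \<alpha> t (\<sigma> k) * exp (- \<gamma> k t)) (at t within ?I)"
      by (simp add: o_def)
    from has_vector_derivative_mult_right[OF this, of "c k"]
    show ?thesis unfolding g_def g'_def by (simp add: ac_simps)
  qed
  have gnz: "g k t \<noteq> 0" for k t using c unfolding g_def by simp
  have gcont: "continuous_on ?I (g k)" for k
    using gd by (intro continuous_on_vector_derivative) blast
  have g'cont: "continuous_on ?I (g' k)" for k
    unfolding g'_def by (intro continuous_intros \<alpha>cont gcont)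
  define G where "G t = Tr (Mn \<sigma> (\<lambda>k. g k t))" for t
  define G' where "G' t = Tr (Mn \<sigma> (\<lambda>k. g' k t))" for t
  have Gsum: "G = (\<lambda>t. \<Sum>k\<in>UNIV. cscale (g k t) (ketbra (e (\<sigma> k)) (es k)))"
    unfolding G_def Tr_Mn ..
  have G'sum: "G' = (\<lambda>t. \<Sum>k\<in>UNIV. cscale (g' k t) (ketbra (e (\<sigma> k)) (es k)))"
    unfolding G'_def Tr_Mn ..
  have Gd: "(G has_vector_derivative G' t) (at t within ?I)" if "t \<in> ?I" for t
    unfolding Gsum G'sum by (rule hvd_cscale_sum) (rule gd[OF that])
  have Gc: "continuous_on ?I G" unfolding Gsum by (intro cont_cscale_sum gcont)
  have G'c: "continuous_on ?I G'" unfolding G'sum by (intro cont_cscale_sum g'cont)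
  have G_0: "G 0 = Tr (Mn \<sigma> c)" unfolding G_def g_def \<gamma>_def by simp
  have GGO: "G t \<in> GO e es" for t unfolding G_def using \<sigma> gnz by (intro GO_Mn) auto
  define \<beta> where "\<beta> t k = - \<alpha> t (\<sigma> k)" for t k
  have G'eq: "G' t = G t ** Tr (Mn id (\<beta> t))" for t
    unfolding G_def G'_def Tr_mult Mn_mult g'_def \<beta>_def by (simp add: ac_simps)
  define Vt where "Vt t = V t ** G t" for t
  define Vt' where "Vt' t = V t ** G' t + V' t ** G t" for t
  have Vtd: "(Vt has_vector_derivative Vt' t) (at t within ?I)" if "t \<in> ?I" for t
    unfolding Vt_def Vt'_def
    using bounded_bilinear.has_vector_derivative[OF bb_mmult V'd[rule_format, OF that] Gd[OF that]] .
  have Vt'c: "continuous_on ?I Vt'" unfolding Vt'_def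
    by (intro continuous_on_add cont_mmult Vc V'c Gc G'c)
  have Vtc: "continuous_on ?I Vt" using Vtd by (intro continuous_on_vector_derivative) blast
  have Vtfib: "Vt t \<in> fiber (Oc t) Ozero" if "t \<in> ?I" for t
    unfolding Vt_def by (rule fiber_mult_nrm[OF Vfib[OF that] GO_nrm[OF GGO]])
  have Vt0: "Vt 0 = V0"
  proof -
    have "Vt 0 = V 0 ** (matrix_inv (V 0) ** V0)" unfolding Vt_def G_0 G0 ..
    also have "\<dots> = V0" using invV[of 0] tau by (simp add: matrix_mul_assoc minv_props)
    finally show ?thesis .
  qed
  have hor: "\<Omega> (Vt t) (vector_derivative Vt (at t within ?I)) = 0" if t: "t \<in> ?I" for t
  proof -
    have vd: "vector_derivative Vt (at t within ?I) = Vt' t"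
      using vector_derivative_within_cbox[OF tau, of t Vt "Vt' t"] Vtd[OF t] t by simp
    have iVt: "invertible (Vt t)" using fiber_inv[OF Vtfib[OF t]] .
    have 1: "V t ** G' t = Vt t ** Tr (Mn id (\<beta> t))"
      unfolding G'eq Vt_def by (simp add: matrix_mul_assoc)
    have 2: "\<Omega> (Vt t) (Vt t ** Tr (Mn id (\<beta> t))) = Tr (Mn id (\<beta> t))"
      by (rule \<Omega>_diag[OF Vtfib[OF t]])
    have 3: "\<Omega> (Vt t) (V' t ** G t) = matrix_inv (G t) ** A t ** G t"
      unfolding Vt_def A_def by (rule \<Omega>_equiv[OF GGO invV[OF t]])
    have 4: "matrix_inv (G t) ** A t ** G t = Tr (Mn id (\<lambda>j. \<alpha> t (\<sigma> j)))"
    proof -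
      have gi: "matrix_inv (G t) = Tr (Mn (inv \<sigma>) (\<lambda>j. 1 / g (inv \<sigma> j) t))"
        unfolding G_def by (rule GO_inv(2)[OF \<sigma>]) (use gnz in auto)
      have "Mn (inv \<sigma>) (\<lambda>j. 1 / g (inv \<sigma> j) t) ** Mn id (\<alpha> t) ** Mn \<sigma> (\<lambda>k. g k t)
          = Mn (inv \<sigma> \<circ> id \<circ> \<sigma>) (\<lambda>j. 1 / g (inv \<sigma> (\<sigma> j)) t * \<alpha> t (\<sigma> j) * g j t)"
        unfolding Mn_mult by simp
      also have "\<dots> = Mn id (\<lambda>j. \<alpha> t (\<sigma> j))"
        using gnz by (intro arg_cong2[where f=Mn] ext)
          (auto simp: permutes_inverses[OF \<sigma>] permutes_inv_o(2)[OF \<sigma>])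
      finally show ?thesis unfolding gi unfolding Aeq[OF t] G_def Tr_mult by simp
    qed
    have "\<Omega> (Vt t) (Vt' t) = \<Omega> (Vt t) (V t ** G' t) + \<Omega> (Vt t) (V' t ** G t)"
      unfolding Vt'_def by (rule \<Omega>_add[OF iVt])
    also have "\<dots> = Tr (Mn id (\<beta> t)) + Tr (Mn id (\<lambda>j. \<alpha> t (\<sigma> j)))"
      unfolding 1 2 3 4 ..
    also have "\<dots> = 0"
      unfolding Tr_add[symmetric] Mn_add \<beta>_def by (simp add: Mn_zero Tr_zero)
    finally show ?thesis unfolding vd .
  qed
  have "is_horizontal_lift e es \<Omega> \<tau> Oc Vt"
    unfolding is_horizontal_lift_def is_smooth_lift_def is_lift_def
    using Vtc Vtfib Vtd Vt'c hor by blast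
  thus ?thesis using Vt0 by blast
qed

end



context conn begin

lemma uniqueness:
  assumes tau: "0 < \<tau>"
    and V: "is_horizontal_lift e es \<Omega> \<tau> Oc V" and W: "is_horizontal_lift e es \<Omega> \<tau> Oc W"
    and init: "W 0 = V 0"
  shows "\<forall>t\<in>{0..\<tau>}. W t = V t"
proof -
  let ?I = "{0..\<tau>}"
  have Vfib: "\<And>t. t \<in> ?I \<Longrightarrow> V t \<in> fiber (Oc t) Ozero"
    and Vhor: "\<And>t. t \<in> ?I \<Longrightarrow> \<Omega> (V t) (vector_derivative V (at t within ?I)) = 0"
    using V unfolding is_horizontal_lift_def is_smooth_lift_def is_lift_def by auto
  obtain Vd where Vd: "\<And>t. t \<in> ?I \<Longrightarrow> (V has_vector_derivative Vd t) (at t within ?I)"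
    using V unfolding is_horizontal_lift_def is_smooth_lift_def by blast
  have Wfib: "\<And>t. t \<in> ?I \<Longrightarrow> W t \<in> fiber (Oc t) Ozero"
    and Whor: "\<And>t. t \<in> ?I \<Longrightarrow> \<Omega> (W t) (vector_derivative W (at t within ?I)) = 0"
    using W unfolding is_horizontal_lift_def is_smooth_lift_def is_lift_def by auto
  obtain Wd where Wd: "\<And>t. t \<in> ?I \<Longrightarrow> (W has_vector_derivative Wd t) (at t within ?I)"
    using W unfolding is_horizontal_lift_def is_smooth_lift_def by blast
  have invV: "\<And>t. t \<in> ?I \<Longrightarrow> invertible (V t)" using Vfib fiber_inv by blast
  have invW: "\<And>t. t \<in> ?I \<Longrightarrow> invertible (W t)" using Wfib fiber_inv by blast
  have vdI: "vector_derivative f (at t within ?I) = f'" if "t \<in> ?I" "(f has_vector_derivative f') (at t within ?I)"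
    for f :: "real \<Rightarrow> complex^'n^'n" and f' t
    using vector_derivative_within_cbox[OF tau, of t f f'] that by simp
  have Vhor': "\<Omega> (V t) (Vd t) = 0" if "t \<in> ?I" for t
    using Vhor[OF that] vdI[OF that Vd[OF that]] by simp
  have Whor': "\<Omega> (W t) (Wd t) = 0" if "t \<in> ?I" for t
    using Whor[OF that] vdI[OF that Wd[OF that]] by simp
  define H where "H t = matrix_inv (V t) ** W t" for t
  define Hd where "Hd t = matrix_inv (V t) ** Wd t + (- (matrix_inv (V t) ** Vd t ** matrix_inv (V t))) ** W t" for t
  have Hder: "(H has_vector_derivative Hd t) (at t within ?I)" if "t \<in> ?I" for t
    unfolding H_def Hd_def
    by (rule bounded_bilinear.has_vector_derivative[OF bb_mmult
          has_vector_derivative_minv[OF Vd[OF that] invV[OF that]] Wd[OF that]])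
  have Hc: "continuous_on ?I H" using Hder by (intro continuous_on_vector_derivative) blast
  have VH: "V s ** H s = W s" if "s \<in> ?I" for s
    unfolding H_def by (simp add: matrix_mul_assoc minv_props[OF invV[OF that]])
  have Hn: "nrm (H s)" if "s \<in> ?I" for s
    unfolding H_def by (rule fiber_quot_nrm[OF Vfib[OF that] Wfib[OF that]])
  have Hzero: "Hd t = 0" if t: "t \<in> {0<..<\<tau>}" for t
  proof -
    have tI: "t \<in> ?I" using t by auto
    have HGO: "H t \<in> GO e es" by (rule nrm_GO[OF Hn[OF tI]])
    have invH: "invertible (H t)" using Hn[OF tI] unfolding nrm_def by blast
    have Wd_eq: "Wd t = V t ** Hd t + Vd t ** H t"
    proof -
      have "((\<lambda>s. V s ** H s) has_vector_derivative (V t ** Hd t + Vd t ** H t)) (at t within ?I)"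
        by (rule bounded_bilinear.has_vector_derivative[OF bb_mmult Vd[OF tI] Hder[OF tI]])
      hence "(W has_vector_derivative (V t ** Hd t + Vd t ** H t)) (at t within ?I)"
        by (rule has_vector_derivative_transform[OF tI, rotated]) (simp add: VH)
      from vdI[OF tI this] vdI[OF tI Wd[OF tI]] show ?thesis by simp
    qed
    have eq1: "\<Omega> (W t) (Vd t ** H t) = 0"
    proof -
      have "\<Omega> (W t) (Vd t ** H t) = \<Omega> (V t ** H t) (Vd t ** H t)" using VH[OF tI] by simp
      also have "\<dots> = matrix_inv (H t) ** \<Omega> (V t) (Vd t) ** H t"
        by (rule \<Omega>_equiv[OF HGO invV[OF tI]])
      also have "\<dots> = 0" unfolding Vhor'[OF tI]
        by (simp add: bounded_bilinear.zero_left[OF bb_mmult] bounded_bilinear.zero_right[OF bb_mmult])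
      finally show ?thesis .
    qed
    have vert: "vertical Ozero (W t) (V t ** Hd t)"
    proof -
      define \<epsilon> where "\<epsilon> = min t (\<tau> - t)"
      have \<epsilon>: "\<epsilon> > 0" using t unfolding \<epsilon>_def by auto
      define c where "c s = V t ** H (t + s)" for s
      have c0: "c 0 = W t" unfolding c_def using VH[OF tI] by simp
      have cfib: "c s \<in> fiber (Oc t) Ozero" if "s \<in> {-\<epsilon><..<\<epsilon>}" for s
      proof -
        have "t + s \<in> ?I" using that t unfolding \<epsilon>_def by auto
        thus ?thesis unfolding c_def by (rule fiber_mult_nrm[OF Vfib[OF tI] Hn])
      qed
      have "(H has_vector_derivative Hd t) (at t within {0<..<\<tau>})"
        by (rule has_vector_derivative_within_subset[OF Hder[OF tI]]) auto
      hence Hat: "(H has_vector_derivative Hd t) (at t)"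
        using has_vector_derivative_within_open[OF t open_greaterThanLessThan, of H "Hd t"] by blast
      have "((\<lambda>s. t + s) has_vector_derivative 1) (at (0::real))"
        by (auto intro!: derivative_eq_intros)
      from vector_diff_chain_at[OF this, of H "Hd t"] Hat
      have "((\<lambda>s. H (t + s)) has_vector_derivative Hd t) (at 0)" by (simp add: o_def)
      hence cd: "(c has_vector_derivative V t ** Hd t) (at 0)"
        unfolding c_def
        by (rule bounded_linear.has_vector_derivative[OF bounded_bilinear.bounded_linear_right[OF bb_mmult]])
      show ?thesis unfolding vertical_def
        by (rule exI[of _ c], rule exI[of _ \<epsilon>], rule exI[of _ "Oc t"]) (use \<epsilon> c0 cfib cd Wfib[OF tI] in auto)
    qed
    have eq2: "\<Omega> (W t) (V t ** Hd t) = matrix_inv (H t) ** Hd t"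
    proof -
      have "\<Omega> (W t) (V t ** Hd t) = matrix_inv (W t) ** (V t ** Hd t)"
        by (rule \<Omega>_vert[OF invW[OF tI] vert])
      also have "matrix_inv (W t) = matrix_inv (H t) ** matrix_inv (V t)"
        unfolding VH[OF tI, symmetric] by (rule minv_mult[OF invV[OF tI] invH])
      finally show ?thesis
        by (simp add: matrix_mul_assoc[symmetric] EiEX minv_props[OF invV[OF tI]])
          (simp add: matrix_mul_assoc minv_props[OF invV[OF tI]])
    qed
    have "0 = \<Omega> (W t) (Wd t)" using Whor'[OF tI] by simp
    also have "\<dots> = \<Omega> (W t) (V t ** Hd t) + \<Omega> (W t) (Vd t ** H t)"
      unfolding Wd_eq by (rule \<Omega>_add[OF invW[OF tI]])
    also have "\<dots> = matrix_inv (H t) ** Hd t" unfolding eq1 eq2 by simp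
    finally have "matrix_inv (H t) ** Hd t = 0" by simp
    hence "H t ** (matrix_inv (H t) ** Hd t) = 0"
      by (simp add: bounded_bilinear.zero_right[OF bb_mmult])
    thus ?thesis by (simp add: matrix_mul_assoc minv_props[OF invH])
  qed
  have H0: "H 0 = mat 1" unfolding H_def init using invV[of 0] tau by (simp add: minv_props)
  have Hconst: "H t = mat 1" if "t \<in> ?I" for t
  proof (rule has_derivative_zero_unique_strong_interval[of "{0, \<tau>}" 0 \<tau> H "mat 1" t])
    show "finite {0, \<tau>}" by simp
    show "continuous_on ?I H" by (rule Hc)
    show "H 0 = mat 1" by (rule H0)
    show "t \<in> ?I" by (rule that)
    fix x assume x: "x \<in> ?I - {0, \<tau>}"
    hence "x \<in> {0<..<\<tau>}" by auto
    hence "Hd x = 0" by (rule Hzero)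
    with Hder[of x] x show "(H has_derivative (\<lambda>h. 0)) (at x within ?I)"
      by (simp add: has_vector_derivative_def)
  qed
  show ?thesis
  proof
    fix t assume t: "t \<in> ?I"
    have "W t = V t ** H t" using VH[OF t] by simp
    thus "W t = V t" using Hconst[OF t] by simp
  qed
qed

end


theorem proposition7p14:
  fixes e es :: "'n::finite \<Rightarrow> complex^'n"
    and \<Omega> :: "'n op \<Rightarrow> 'n op \<Rightarrow> 'n op"
    and Oc :: "real \<Rightarrow> 'n op set"
    and \<tau> :: real and V0 :: "'n op"
  assumes O0: "is_cd_family e es"
    and conn: "is_connection e es \<Omega>"
    and tau: "0 < \<tau>"
    and curve: "\<forall>t\<in>{0..\<tau>}. Oc t \<in> complete_decomps"
    and smooth: "\<exists>V. is_smooth_lift (range (\<lambda>k. ketbra (e k) (es k))) \<tau> Oc V"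
    and V0: "V0 \<in> fiber (Oc 0) (range (\<lambda>k. ketbra (e k) (es k)))"
  shows "\<exists>V. is_horizontal_lift e es \<Omega> \<tau> Oc V \<and> V 0 = V0 \<and>
           (\<forall>W. is_horizontal_lift e es \<Omega> \<tau> Oc W \<and> W 0 = V0 \<longrightarrow> (\<forall>t\<in>{0..\<tau>}. W t = V t))"
proof -
  interpret C: conn e es \<Omega>
    by (intro conn.intro cdf.intro conn_axioms.intro O0 conn)
  from smooth obtain V where "is_smooth_lift (range (\<lambda>k. ketbra (e k) (es k))) \<tau> Oc V" by blast
  then obtain V' where Vl: "is_lift (range (\<lambda>k. ketbra (e k) (es k))) \<tau> Oc V"
    and V'd: "\<forall>t\<in>{0..\<tau>}. (V has_vector_derivative V' t) (at t within {0..\<tau>})"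
    and V'c: "continuous_on {0..\<tau>} V'"
    unfolding is_smooth_lift_def by blast
  obtain Vt where Vt: "is_horizontal_lift e es \<Omega> \<tau> Oc Vt" "Vt 0 = V0"
    using C.existence[OF tau Vl V'd V'c V0] by blast
  show ?thesis
  proof (intro exI[of _ Vt] conjI allI impI)
    show "is_horizontal_lift e es \<Omega> \<tau> Oc Vt" by (rule Vt(1))
    show "Vt 0 = V0" by (rule Vt(2))
    fix W assume W: "is_horizontal_lift e es \<Omega> \<tau> Oc W \<and> W 0 = V0"
    show "\<forall>t\<in>{0..\<tau>}. W t = Vt t"
      by (rule C.uniqueness[OF tau Vt(1)]) (use W Vt(2) in auto)
  qed
qed

end
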